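(* There exists a sequence $S\in\{0,1\}^\omega$ which is i.o. LZ-deep and FS-deep but not (a.e.) LZ-deep.
   Context: $S\upharpoonright n$ is the length-$n$ prefix of $S$. A finite-state transducer (FST) is $T=(Q,q_0,\delta,\nu)$ with finite state set $Q$, start state $q_0$, $\delta:Q\times\{0,1\}\to Q$, $\nu:Q\times\{0,1\}\to\{0,1\}^*$; $T(\lambda)=\lambda$, $T(xb)=T(x)\nu(\hat\delta(x),b)$; $T$ is an ILFST if $x\mapsto(T(x),\hat\delta(x))$ is injective. FSTs are described by the following fixed binary representation. For $n\ge1$, $\mathrm{bin}(n)$ is the binary representation of $n$ and $\mathrm{string}(n)$ is $\mathrm{bin}(n)$ without its leading 1. For $x=x_1\cdots x_l$, $x^\dagger=x_10x_20\cdots x_{l-1}0x_l1$, $x^\diamond=\overline{(1x)^\dagger}$ (bitwise complement), $d(x)=x_1x_1\cdots x_lx_l$. For an FST with states $q_1,\dots,q_m$, write for $t=2i-1+b$: $(\delta(q_i,b),\nu(q_i,b))=(q_{1+(n_t\bmod m)},\mathrm{string}(n'_t))$; the table is encoded as $\pi=\mathrm{bin}(n_1)^\ddagger\mathrm{string}(n'_1)^\diamond\cdots\mathrm{bin}(n_{2m})^\ddagger\mathrm{string}(n'_{2m})^\diamond$, where $\mathrm{bin}(n_t)^\ddagger$ is empty for a self-loop and $\mathrm{bin}(n_t)^\dagger$ otherwise; $d(\mathrm{bin}(i))01\pi$ describes that FST with start state $q_i$. $|T|$ is the shortest description length, $\mathrm{FST}^{\le k}=\{T:|T|\le k\}$,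 and $D^k(x)=\min\{|y|:T\in\mathrm{FST}^{\le k},T(y)=x\}$. $S$ is FS-deep if there is $\alpha>0$ such that for every $k$ there is $k'$ with $D^k(S\upharpoonright n)-D^{k'}(S\upharpoonright n)\ge\alpha n$ for infinitely many $n$. LZ denotes the Lempel–Ziv 78 compressor: it parses $x=x_1\cdots x_n$ into phrases, each distinct from all earlier ones (except possibly the last), with $x_i=x_{l(i)}b_i$, $l(i)<i$, $b_i\in\{0,1\}$, $x_0=\lambda$; it outputs $c_{l(1)}b_1\cdots c_{l(n)}b_n$ with $c_j$ a prefix-free encoding of index $j$. $S$ is (a.e.) LZ-deep if there is $\alpha>0$ such that for every ILFST $C$, $|C(S\upharpoonright n)|-|\mathrm{LZ}(S\upharpoonright n)|\ge\alpha n$ for all but finitely many $n$; $S$ is i.o. LZ-deep if there is $\alpha>0$ such that for every ILFST $C$ this inequality holds for infinitely many $n$. *)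

theory Defs
  imports Complex_Main "HOL-Library.Extended_Real"
begin

text \<open>Binary strings are bool lists (True = 1, False = 0); sequences in {0,1}^omega are
  functions nat => bool.  The length-n prefix of S:\<close>

definition prefix :: "(nat \<Rightarrow> bool) \<Rightarrow> nat \<Rightarrow> bool list" where
  "prefix S n = map S [0..<n]"

text \<open>bin n: binary representation of n (most significant bit first), for n >= 1.\<close>
fun bin :: "nat \<Rightarrow> bool list" where
  "bin n = (if n \<le> 1 then [n = 1] else bin (n div 2) @ [n mod 2 = 1])"

definition str :: "nat \<Rightarrow> bool list" where
  "str n = tl (bin n)"

fun dag :: "bool list \<Rightarrow> bool list" where
  "dag [] = []"
| "dag [x] = [x, True]"
| "dag (x # xs) = x # False # dag xs"

definition diam :: "bool list \<Rightarrow> bool list" where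
  "diam x = map Not (dag (True # x))"

definition dbl :: "bool list \<Rightarrow> bool list" where
  "dbl x = concat (map (\<lambda>b. [b, b]) x)"

text \<open>An FST with m states, represented as the states 0..<m (state q_i of the paper is i-1).\<close>
record fst =
  nstates :: nat
  start :: nat
  delta :: "nat \<Rightarrow> bool \<Rightarrow> nat"
  nu :: "nat \<Rightarrow> bool \<Rightarrow> bool list"

definition wf_fst :: "fst \<Rightarrow> bool" where
  "wf_fst T \<longleftrightarrow> 0 < nstates T \<and> start T < nstates T \<and>
     (\<forall>q < nstates T. \<forall>b. delta T q b < nstates T)"

fun run_from :: "fst \<Rightarrow> nat \<Rightarrow> bool list \<Rightarrow> bool list \<times> nat" where
  "run_from T q [] = ([], q)"
| "run_from T q (b # x) =
     (let (w, q') = run_from T (delta T q b) x in (nu T q b @ w, q'))"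

definition fst_out :: "fst \<Rightarrow> bool list \<Rightarrow> bool list" where
  "fst_out T x = fst (run_from T (start T) x)"

definition fst_state :: "fst \<Rightarrow> bool list \<Rightarrow> nat" where
  "fst_state T x = snd (run_from T (start T) x)"

definition ILFST :: "fst \<Rightarrow> bool" where
  "ILFST T \<longleftrightarrow> wf_fst T \<and> inj (\<lambda>x. (fst_out T x, fst_state T x))"

text \<open>Entry j = 2q + b (q < m state, b bit) of the table encoding pi, given the numbers
  n_t = ns!j and n'_t = ns'!j, where t = j+1.\<close>
definition table_entry :: "fst \<Rightarrow> nat list \<Rightarrow> nat list \<Rightarrow> nat \<Rightarrow> bool list" where
  "table_entry T ns ns' j =
     (let q = j div 2; b = odd j in
       (if delta T q b = q then [] else dag (bin (ns ! j))) @ diam (str (ns' ! j)))"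

text \<open>y describes T: y = d(bin i) 01 pi, with start state q_i.\<close>
definition describes :: "bool list \<Rightarrow> fst \<Rightarrow> bool" where
  "describes y T \<longleftrightarrow> wf_fst T \<and>
     (\<exists>ns ns'. length ns = 2 * nstates T \<and> length ns' = 2 * nstates T \<and>
        (\<forall>j < 2 * nstates T. 1 \<le> ns ! j \<and> 1 \<le> ns' ! j \<and>
            delta T (j div 2) (odd j) = (ns ! j) mod nstates T \<and>
            nu T (j div 2) (odd j) = str (ns' ! j)) \<and>
        y = dbl (bin (start T + 1)) @ [False, True] @
            concat (map (table_entry T ns ns') [0..<2 * nstates T]))"

definition fst_size :: "fst \<Rightarrow> nat" where
  "fst_size T = (LEAST l. \<exists>y. describes y T \<and> length y = l)"

definition FST_le :: "nat \<Rightarrow> fst set" where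
  "FST_le k = {T. (\<exists>y. describes y T) \<and> fst_size T \<le> k}"

text \<open>D^k(x) (infinite if no FST in FST^{<=k} outputs x).\<close>
definition Dk :: "nat \<Rightarrow> bool list \<Rightarrow> enat" where
  "Dk k x = (INF y \<in> {y. \<exists>T \<in> FST_le k. fst_out T y = x}. enat (length y))"

definition FS_deep :: "(nat \<Rightarrow> bool) \<Rightarrow> bool" where
  "FS_deep S \<longleftrightarrow> (\<exists>\<alpha>::real > 0. \<forall>k. \<exists>k'.
     \<exists>\<^sub>F n in sequentially.
       ereal_of_enat (Dk k (prefix S n)) \<ge> ereal_of_enat (Dk k' (prefix S n)) + ereal (\<alpha> * real n))"

text \<open>Index of a phrase in the dictionary D (D ! (j-1) is phrase x_j; x_0 is the empty word).\<close>
definition lz_idx :: "bool list list \<Rightarrow> bool list \<Rightarrow> nat" where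
  "lz_idx D p = (if p = [] then 0 else Suc (LEAST j. j < length D \<and> D ! j = p))"

text \<open>Greedy LZ78 parsing; produces the pairs (l(i), b_i).  The fuel argument is the
  length of the remaining input (each step consumes at least one bit).\<close>
primrec lz_pairs :: "nat \<Rightarrow> bool list list \<Rightarrow> bool list \<Rightarrow> (nat \<times> bool) list" where
  "lz_pairs 0 D w = []"
| "lz_pairs (Suc f) D w =
     (if w = [] then [] else
      let k = (GREATEST k. k \<le> length w \<and> (take k w = [] \<or> take k w \<in> set D)) in
      if k = length w then [(lz_idx D (butlast w), last w)]
      else (lz_idx D (take k w), w ! k) # lz_pairs f (D @ [take (Suc k) w]) (drop (Suc k) w))"

definition lz_code :: "nat \<Rightarrow> bool list" where
  "lz_code j = dag (bin (j + 1))"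

definition LZ :: "bool list \<Rightarrow> bool list" where
  "LZ x = concat (map (\<lambda>(j, b). lz_code j @ [b]) (lz_pairs (length x) [] x))"

definition LZ_deep :: "(nat \<Rightarrow> bool) \<Rightarrow> bool" where
  "LZ_deep S \<longleftrightarrow> (\<exists>\<alpha>::real > 0. \<forall>C. ILFST C \<longrightarrow>
     (\<forall>\<^sub>F n in sequentially.
        real (length (fst_out C (prefix S n))) - real (length (LZ (prefix S n))) \<ge> \<alpha> * real n))"

definition io_LZ_deep :: "(nat \<Rightarrow> bool) \<Rightarrow> bool" where
  "io_LZ_deep S \<longleftrightarrow> (\<exists>\<alpha>::real > 0. \<forall>C. ILFST C \<longrightarrow>
     (\<exists>\<^sub>F n in sequentially.
        real (length (fst_out C (prefix S n))) - real (length (LZ (prefix S n))) \<ge> \<alpha> * real n))"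

end

theory Submission
  imports Defs
begin


definition outf :: "fst \<Rightarrow> nat \<Rightarrow> bool list \<Rightarrow> bool list" where
  "outf T q x = fst (run_from T q x)"
definition stf :: "fst \<Rightarrow> nat \<Rightarrow> bool list \<Rightarrow> nat" where
  "stf T q x = snd (run_from T q x)"

lemma run_from_Cons': "run_from T q (b # x) = (nu T q b @ outf T (delta T q b) x, stf T (delta T q b) x)"
  by (simp add: outf_def stf_def split: prod.splits)

lemma outf_Nil[simp]: "outf T q [] = []" and stf_Nil[simp]: "stf T q [] = q"
  by (simp_all add: outf_def stf_def)

lemma outf_Cons[simp]: "outf T q (b # x) = nu T q b @ outf T (delta T q b) x"
  and stf_Cons[simp]: "stf T q (b # x) = stf T (delta T q b) x"
  by (simp_all add: outf_def stf_def run_from_Cons' del: run_from.simps)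

lemma outf_append[simp]: "outf T q (x @ y) = outf T q x @ outf T (stf T q x) y"
  and stf_append[simp]: "stf T q (x @ y) = stf T (stf T q x) y"
  by (induct x arbitrary: q) auto

lemma fst_out_outf: "fst_out T x = outf T (start T) x"
  by (simp add: fst_out_def outf_def)
lemma fst_state_stf: "fst_state T x = stf T (start T) x"
  by (simp add: fst_state_def stf_def)

lemma stf_lt: "wf_fst T \<Longrightarrow> q < nstates T \<Longrightarrow> stf T q x < nstates T"
  by (induct x arbitrary: q) (auto simp: wf_fst_def)

definition canon :: "fst \<Rightarrow> fst" where
  "canon T = \<lparr>nstates = nstates T, start = start T,
     delta = (\<lambda>q b. if q < nstates T then delta T q b else 0),
     nu = (\<lambda>q b. if q < nstates T then nu T q b else [])\<rparr>"

lemma canon_simps[simp]: "nstates (canon T) = nstates T" "start (canon T) = start T"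
  "q < nstates T \<Longrightarrow> delta (canon T) q b = delta T q b"
  "q < nstates T \<Longrightarrow> nu (canon T) q b = nu T q b"
  by (auto simp: canon_def)

lemma canon_run: "wf_fst T \<Longrightarrow> q < nstates T \<Longrightarrow> outf (canon T) q x = outf T q x \<and> stf (canon T) q x = stf T q x"
  by (induct x arbitrary: q) (auto simp: wf_fst_def)

lemma canon_wf: "wf_fst T \<Longrightarrow> wf_fst (canon T)"
  by (auto simp: wf_fst_def)

lemma canon_fst_out: "wf_fst T \<Longrightarrow> fst_out (canon T) x = fst_out T x \<and> fst_state (canon T) x = fst_state T x"
  using canon_run[of T "start T" x] by (auto simp: fst_out_outf fst_state_stf wf_fst_def)

lemma canon_ILFST: "ILFST T \<Longrightarrow> ILFST (canon T)"
  using canon_fst_out[of T] canon_wf[of T] by (auto simp: ILFST_def wf_fst_def)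

definition mk :: "nat \<Rightarrow> nat \<Rightarrow> nat list \<Rightarrow> bool list list \<Rightarrow> fst" where
  "mk m s dl nl = \<lparr>nstates = m, start = s,
     delta = (\<lambda>q b. if q < m then dl ! (2*q + (if b then 1 else 0)) else 0),
     nu = (\<lambda>q b. if q < m then nl ! (2*q + (if b then 1 else 0)) else [])\<rparr>"


lemma canon_mk: "canon T = mk (nstates T) (start T)
   (map (\<lambda>j. delta T (j div 2) (odd j)) [0..<2 * nstates T])
   (map (\<lambda>j. nu T (j div 2) (odd j)) [0..<2 * nstates T])"
proof -
  have a: "q < nstates T \<Longrightarrow> 2*q + (if b then 1 else 0) < 2 * nstates T" for q b by auto
  have b: "(2*q + (if b then 1 else 0)) div 2 = q" "odd (2*q + (if b then 1 else 0)) = b" for q::nat and b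
    by auto
  show ?thesis unfolding canon_def mk_def
    by (rule fst.equality) (auto intro!: ext simp: a b)
qed

definition bnd_set :: "nat \<Rightarrow> fst set" where
  "bnd_set i = {T. wf_fst T \<and> nstates T \<le> i \<and> (\<forall>q < nstates T. \<forall>b. length (nu T q b) \<le> i)}"

lemma finite_canon_bnd: "finite (canon ` bnd_set i)"
proof -
  let ?A = "{..i} \<times> {..i} \<times> {xs. set xs \<subseteq> {..i} \<and> length xs \<le> 2*i} \<times>
            {xs. set xs \<subseteq> {l::bool list. set l \<subseteq> UNIV \<and> length l \<le> i} \<and> length xs \<le> 2*i}"
  have fA: "finite ?A"
    by (intro finite_cartesian_product finite_lists_length_le finite_atMost) auto
  have "canon ` bnd_set i \<subseteq> (\<lambda>(m,s,dl,nl). mk m s dl nl) ` ?A"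
  proof
    fix C assume "C \<in> canon ` bnd_set i"
    then obtain T where T: "T \<in> bnd_set i" "C = canon T" by auto
    have wf: "wf_fst T" "nstates T \<le> i" "\<forall>q < nstates T. \<forall>b. length (nu T q b) \<le> i"
      using T by (auto simp: bnd_set_def)
    have 1: "\<forall>j < 2 * nstates T. delta T (j div 2) (odd j) < nstates T"
      using wf(1) by (auto simp: wf_fst_def)
    have m: "(nstates T, start T, map (\<lambda>j. delta T (j div 2) (odd j)) [0..<2 * nstates T], map (\<lambda>j. nu T (j div 2) (odd j)) [0..<2 * nstates T]) \<in> ?A"
    proof -
      have "start T \<le> i" using wf by (auto simp: wf_fst_def)
      moreover have "set (map (\<lambda>j. delta T (j div 2) (odd j)) [0..<2 * nstates T]) \<subseteq> {..i}"
        using 1 wf(2) by fastforce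
      moreover have "set (map (\<lambda>j. nu T (j div 2) (odd j)) [0..<2 * nstates T]) \<subseteq> {l. set l \<subseteq> UNIV \<and> length l \<le> i}"
        using wf(3) by auto
      ultimately show ?thesis using wf(2) by auto
    qed
    show "C \<in> (\<lambda>(m,s,dl,nl). mk m s dl nl) ` ?A"
      unfolding T(2) canon_mk by (rule image_eqI[OF _ m]) simp
  qed
  then show ?thesis using fA finite_surj by blast
qed

lemma card_short_lists: "card {v::bool list. length v \<le> L} \<le> 2^(L+1)"
proof -
  have "card {v::bool list. set v \<subseteq> UNIV \<and> length v \<le> L} = (\<Sum>j\<le>L. 2^j)"
    using card_lists_length_le[of "UNIV::bool set" L] by simp
  also have "\<dots> < 2^(L+1)"
  proof (induct L)
    case 0 then show ?case by simp
  next
    case (Suc L) then show ?case by simp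
  qed
  finally show ?thesis by simp
qed

lemma finite_short_lists: "finite {v::bool list. length v \<le> L}"
  using finite_lists_length_le[of "UNIV::bool set" L] by simp

lemma card_len_lists: "card {v::bool list. length v = L} = 2^L"
  using card_lists_length_eq[of "UNIV::bool set" L] by simp

lemma finite_len_lists: "finite {v::bool list. length v = L}"
  using finite_lists_length_eq[of "UNIV::bool set" L] by simp

lemma exists_avoid: assumes "finite B" "card B < 2^L" shows "\<exists>x::bool list. length x = L \<and> x \<notin> B"
proof (rule ccontr)
  assume "\<not> ?thesis"
  then have "{x. length x = L} \<subseteq> B \<inter> {x. length x = L}" by auto
  then have "card {x::bool list. length x = L} \<le> card (B \<inter> {x. length x = L})"
    by (intro card_mono) (auto simp: finite_len_lists)
  also have "\<dots> \<le> card B" using assms(1) by (intro card_mono) auto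
  finally show False using assms card_len_lists[of L] by simp
qed

lemma ILFST_reach_inj:
  assumes "ILFST C" "fst_state C z = q"
  shows "inj (\<lambda>x. (outf C q x, stf C q x))"
proof (rule injI)
  fix x y assume "(outf C q x, stf C q x) = (outf C q y, stf C q y)"
  then have "(fst_out C (z @ x), fst_state C (z @ x)) = (fst_out C (z @ y), fst_state C (z @ y))"
    using assms(2) by (simp add: fst_out_outf fst_state_stf)
  then have "z @ x = z @ y" using assms(1) unfolding ILFST_def inj_def by blast
  then show "x = y" by simp
qed

lemma ILFST_reach_count:
  assumes "ILFST C" "nstates C \<le> i"
  shows "card {x. length x = l \<and> (\<exists>z. fst_state C z = q) \<and> length (outf C q x) \<le> L} \<le> 2^(L+1) * i"
proof (cases "\<exists>z. fst_state C z = q")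
  case False then show ?thesis by simp
next
  case True
  then obtain z where z: "fst_state C z = q" by auto
  have wf: "wf_fst C" using assms by (simp add: ILFST_def)
  have qlt: "q < nstates C" using z stf_lt[OF wf, of "start C" z] wf by (auto simp: fst_state_stf wf_fst_def)
  let ?A = "{x. length x = l \<and> (\<exists>z. fst_state C z = q) \<and> length (outf C q x) \<le> L}"
  have "card ?A \<le> card ({v::bool list. length v \<le> L} \<times> {..<i})"
  proof (rule card_inj_on_le[where f = "\<lambda>x. (outf C q x, stf C q x)"])
    show "inj_on (\<lambda>x. (outf C q x, stf C q x)) ?A"
      using ILFST_reach_inj[OF assms(1) z] by (simp add: inj_on_def inj_def)
    show "(\<lambda>x. (outf C q x, stf C q x)) ` ?A \<subseteq> {v. length v \<le> L} \<times> {..<i}"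
      using stf_lt[OF wf qlt] assms(2) by (auto intro: less_le_trans)
    show "finite ({v::bool list. length v \<le> L} \<times> {..<i})"
      using finite_short_lists by auto
  qed
  also have "\<dots> = card {v::bool list. length v \<le> L} * i" by (simp add: card_cartesian_product)
  also have "\<dots> \<le> 2^(L+1) * i" using card_short_lists by simp
  finally show ?thesis .
qed


declare bin.simps[simp del]

lemma bin_len: "1 \<le> n \<Longrightarrow> n < 2^E \<Longrightarrow> length (bin n) \<le> E"
proof (induct n arbitrary: E rule: bin.induct)
  case (1 n)
  show ?case
  proof (cases "n \<le> 1")
    case True
    then have "E \<ge> 1" using 1 by (cases E) auto
    then show ?thesis using True by (simp add: bin.simps[of n])
  next
    case False
    then obtain E' where E: "E = Suc E'" using 1 by (cases E) auto
    have "n div 2 < 2^E'" using 1(3) E by auto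
    moreover have "1 \<le> n div 2" using False by auto
    ultimately have "length (bin (n div 2)) \<le> E'" using 1(1) False by auto
    then show ?thesis using False E by (simp add: bin.simps[of n])
  qed
qed

lemma len_dag: "length (dag l) = 2 * length l"
  by (induct l rule: dag.induct) auto

definition lzk :: "bool list list \<Rightarrow> bool list \<Rightarrow> nat" where
  "lzk D w = (GREATEST k. k \<le> length w \<and> (take k w = [] \<or> take k w \<in> set D))"

lemma lzk_props: "lzk D w \<le> length w" "take (lzk D w) w = [] \<or> take (lzk D w) w \<in> set D"
  "k \<le> length w \<Longrightarrow> take k w \<in> set D \<Longrightarrow> k \<le> lzk D w"
proof -
  let ?P = "\<lambda>k. k \<le> length w \<and> (take k w = [] \<or> take k w \<in> set D)"
  have p0: "?P 0" by simp
  have b: "\<And>y. ?P y \<Longrightarrow> y \<le> length w" by simp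
  have "?P (lzk D w)" unfolding lzk_def by (rule GreatestI_nat[where P="?P", OF p0 b])
  then show "lzk D w \<le> length w" "take (lzk D w) w = [] \<or> take (lzk D w) w \<in> set D" by auto
  show "k \<le> length w \<Longrightarrow> take k w \<in> set D \<Longrightarrow> k \<le> lzk D w"
    unfolding lzk_def by (rule Greatest_le_nat[where P="?P", OF _ b]) auto
qed

lemma lz_pairs_Suc: "lz_pairs (Suc f) D w =
     (if w = [] then [] else
      if lzk D w = length w then [(lz_idx D (butlast w), last w)]
      else (lz_idx D (take (lzk D w) w), w ! lzk D w) # lz_pairs f (D @ [take (Suc (lzk D w)) w]) (drop (Suc (lzk D w)) w))"
  by (simp only: lz_pairs.simps lzk_def Let_def)

declare lz_pairs.simps(2)[simp del]

primrec lz_phr :: "nat \<Rightarrow> bool list list \<Rightarrow> bool list \<Rightarrow> bool list list" where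
  "lz_phr 0 D w = []"
| "lz_phr (Suc f) D w =
     (if w = [] then [] else
      if lzk D w = length w then [w]
      else take (Suc (lzk D w)) w # lz_phr f (D @ [take (Suc (lzk D w)) w]) (drop (Suc (lzk D w)) w))"

lemma lz_len_eq: "length (lz_pairs f D w) = length (lz_phr f D w)"
  by (induct f arbitrary: D w) (auto simp: lz_pairs_Suc)

lemma lz_concat: "length w \<le> f \<Longrightarrow> concat (lz_phr f D w) = w"
proof (induct f arbitrary: D w)
  case 0 then show ?case by simp
next
  case (Suc f)
  show ?case
  proof (cases "w = [] \<or> lzk D w = length w")
    case True then show ?thesis by auto
  next
    case False
    then have "lzk D w < length w" using lzk_props(1)[of D w] by auto
    then have "length (drop (Suc (lzk D w)) w) \<le> f" using Suc(2) by auto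
    then show ?thesis using False Suc(1) by simp
  qed
qed

lemma lz_nonempty: "\<phi> \<in> set (lz_phr f D w) \<Longrightarrow> \<phi> \<noteq> []"
proof (induct f arbitrary: D w)
  case 0 then show ?case by simp
next
  case (Suc f)
  then show ?case
    using lzk_props(1)[of D w] by (auto split: if_splits)
qed

lemma lz_distinct: "distinct (butlast (lz_phr f D w)) \<and> set (butlast (lz_phr f D w)) \<inter> set D = {}"
proof (induct f arbitrary: D w)
  case 0 then show ?case by simp
next
  case (Suc f)
  show ?case
  proof (cases "w = [] \<or> lzk D w = length w")
    case True then show ?thesis by auto
  next
    case False
    let ?k = "lzk D w"
    let ?phi = "take (Suc ?k) w"
    have lt: "?k < length w" using False lzk_props(1)[of D w] by auto
    have notin: "?phi \<notin> set D"
    proof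
      assume "?phi \<in> set D"
      then have "Suc ?k \<le> ?k" using lzk_props(3)[of "Suc ?k" w D] lt by auto
      then show False by simp
    qed
    let ?r = "lz_phr f (D @ [?phi]) (drop (Suc ?k) w)"
    have IH: "distinct (butlast ?r) \<and> set (butlast ?r) \<inter> set (D @ [?phi]) = {}" by (rule Suc)
    have eq: "lz_phr (Suc f) D w = ?phi # ?r" using False by simp
    show ?thesis unfolding eq using IH notin by (cases ?r) auto
  qed
qed

definition pc :: "bool list list \<Rightarrow> bool" where
  "pc D \<longleftrightarrow> (\<forall>p \<in> set D. butlast p = [] \<or> butlast p \<in> set D)"

lemma lz_idx_le: "p = [] \<or> p \<in> set D \<Longrightarrow> lz_idx D p \<le> length D"
proof -
  assume a: "p = [] \<or> p \<in> set D"
  show ?thesis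
  proof (cases "p = []")
    case True then show ?thesis by (simp add: lz_idx_def)
  next
    case False
    then obtain j where j: "j < length D" "D ! j = p" using a by (auto simp: in_set_conv_nth)
    then have "(LEAST j. j < length D \<and> D ! j = p) < length D"
      by (metis (mono_tags, lifting) LeastI)
    then show ?thesis using False by (simp add: lz_idx_def)
  qed
qed

lemma lz_idx_bound: "pc D \<Longrightarrow> (j, b) \<in> set (lz_pairs f D w) \<Longrightarrow> j < length D + length (lz_pairs f D w)"
proof (induct f arbitrary: D w)
  case 0 then show ?case by simp
next
  case (Suc f)
  show ?case
  proof (cases "w = []")
    case True then show ?thesis using Suc by (simp add: lz_pairs_Suc)
  next
    case wne: False
    show ?thesis
    proof (cases "lzk D w = length w")
      case True
      then have "w \<in> set D" using lzk_props(2)[of D w] wne by auto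
      then have "butlast w = [] \<or> butlast w \<in> set D" using Suc(2) by (auto simp: pc_def)
      then have "lz_idx D (butlast w) \<le> length D" by (rule lz_idx_le)
      then show ?thesis using Suc(3) True wne by (simp add: lz_pairs_Suc)
    next
      case False
      let ?k = "lzk D w"
      let ?phi = "take (Suc ?k) w"
      have lt: "?k < length w" using False lzk_props(1)[of D w] by auto
      have i1: "lz_idx D (take ?k w) \<le> length D" using lzk_props(2)[of D w] by (rule lz_idx_le)
      have pc': "pc (D @ [?phi])"
        using Suc(2) lzk_props(2)[of D w] lt by (auto simp: pc_def butlast_take)
      have eq: "lz_pairs (Suc f) D w = (lz_idx D (take ?k w), w ! ?k) # lz_pairs f (D @ [?phi]) (drop (Suc ?k) w)"
        using False wne by (simp add: lz_pairs_Suc)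
      show ?thesis
        using Suc(3) unfolding eq using i1 Suc(1)[OF pc', of "drop (Suc ?k) w"] by auto
    qed
  qed
qed

lemma LZ_len: "length (LZ x) = sum_list (map (\<lambda>(j,b). 2 * length (bin (j+1)) + 1) (lz_pairs (length x) [] x))"
proof -
  have "\<And>ps. length (concat (map (\<lambda>(j, b). lz_code j @ [b]) ps)) = sum_list (map (\<lambda>(j,b). 2 * length (bin (j+1)) + 1) ps)"
    subgoal for ps by (induct ps) (auto simp: lz_code_def len_dag)
    done
  then show ?thesis by (simp add: LZ_def)
qed

lemma sum_list_bound: "(\<And>p. p \<in> set ps \<Longrightarrow> g p \<le> B) \<Longrightarrow> sum_list (map g ps) \<le> length ps * B"
  by (induct ps) (auto simp: add_mono)

lemma LZ_bound:
  assumes "length (lz_phr (length x) [] x) < 2^E"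
  shows "length (LZ x) \<le> length (lz_phr (length x) [] x) * (2 * E + 1)"
proof -
  let ?ps = "lz_pairs (length x) [] x"
  have c: "length ?ps < 2^E" using assms lz_len_eq by metis
  have "\<And>p. p \<in> set ?ps \<Longrightarrow> (\<lambda>(j,b). 2 * length (bin (j+1)) + 1) p \<le> 2 * E + 1"
  proof -
    fix p assume p: "p \<in> set ?ps"
    obtain j b where jb: "p = (j, b)" by (cases p)
    have "j < length ?ps" using lz_idx_bound[of "[]" j b "length x" x] p jb by (simp add: pc_def)
    then have "length (bin (j+1)) \<le> E" using c by (intro bin_len) auto
    then show "(\<lambda>(j,b). 2 * length (bin (j+1)) + 1) p \<le> 2 * E + 1" using jb by simp
  qed
  then have "length (LZ x) \<le> length ?ps * (2 * E + 1)"
    unfolding LZ_len by (rule sum_list_bound)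
  then show ?thesis by (simp add: lz_len_eq)
qed


definition per :: "bool list \<Rightarrow> bool list \<Rightarrow> nat \<Rightarrow> bool" where
  "per u v r \<longleftrightarrow> (\<forall>i < length v. v ! i = u ! ((r + i) mod length u))"

lemma per_append: "per u (a @ b) r \<longleftrightarrow> per u a r \<and> per u b (r + length a)"
proof
  assume h: "per u (a @ b) r"
  have 1: "per u a r" unfolding per_def
  proof (intro allI impI)
    fix i assume "i < length a"
    then show "a ! i = u ! ((r + i) mod length u)" using h[unfolded per_def, rule_format, of i]
      by (simp add: nth_append)
  qed
  have 2: "per u b (r + length a)" unfolding per_def
  proof (intro allI impI)
    fix i assume "i < length b"
    then show "b ! i = u ! ((r + length a + i) mod length u)"
      using h[unfolded per_def, rule_format, of "length a + i"] by (simp add: nth_append add.assoc)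
  qed
  show "per u a r \<and> per u b (r + length a)" using 1 2 by simp
next
  assume h: "per u a r \<and> per u b (r + length a)"
  show "per u (a @ b) r" unfolding per_def
  proof (intro allI impI)
    fix i assume i: "i < length (a @ b)"
    show "(a @ b) ! i = u ! ((r + i) mod length u)"
    proof (cases "i < length a")
      case True then show ?thesis using h by (simp add: per_def nth_append)
    next
      case False
      then have "i - length a < length b" using i by simp
      then have "b ! (i - length a) = u ! ((r + length a + (i - length a)) mod length u)"
        using h by (simp add: per_def)
      then show ?thesis using False by (simp add: nth_append)
    qed
  qed
qed

lemma per_concat: "per u (concat qs) r \<Longrightarrow> q \<in> set qs \<Longrightarrow> \<exists>r'. per u q r'"
proof (induct qs arbitrary: r)
  case Nil then show ?case by simp
next
  case (Cons a qs)
  then show ?case by (auto simp: per_append)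
qed

definition U :: "bool list \<Rightarrow> nat \<Rightarrow> nat \<Rightarrow> bool list" where
  "U u r len = map (\<lambda>i. u ! ((r + i) mod length u)) [0..<len]"

lemma per_U: "per u v r \<Longrightarrow> v = U u (r mod length u) (length v)"
  unfolding U_def per_def by (intro nth_equalityI) (auto simp: mod_add_left_eq)

lemma short_per_sub:
  assumes "u \<noteq> []"
  shows "{v. (\<exists>r. per u v r) \<and> length v \<le> J} \<subseteq> (\<lambda>(r,len). U u r len) ` ({..<length u} \<times> {..J})"
proof
  fix v assume "v \<in> {v. (\<exists>r. per u v r) \<and> length v \<le> J}"
  then obtain r where "per u v r" "length v \<le> J" by auto
  then show "v \<in> (\<lambda>(r,len). U u r len) ` ({..<length u} \<times> {..J})"
    using per_U[of u v r] assms by (intro image_eqI[where x="(r mod length u, length v)"]) auto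
qed

lemma finite_short_per: "u \<noteq> [] \<Longrightarrow> finite {v. (\<exists>r. per u v r) \<and> length v \<le> J}"
  using short_per_sub by (rule finite_subset) auto

lemma card_short_per:
  assumes "u \<noteq> []"
  shows "card {v. (\<exists>r. per u v r) \<and> length v \<le> J} \<le> length u * (J + 1)"
proof -
  have "card {v. (\<exists>r. per u v r) \<and> length v \<le> J} \<le> card ((\<lambda>(r,len). U u r len) ` ({..<length u} \<times> {..J}))"
    using short_per_sub[OF assms] by (intro card_mono) auto
  also have "\<dots> \<le> card ({..<length u} \<times> {..J})" by (rule card_image_le) auto
  finally show ?thesis by (simp add: card_cartesian_product)
qed

lemma nonper_count:
  "concat qs = p @ v \<Longrightarrow> per u v r \<Longrightarrow> (\<forall>q\<in>set qs. q \<noteq> []) \<Longrightarrow>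
   length (filter (\<lambda>q. \<not>(\<exists>r. per u q r)) qs) \<le> length p"
proof (induct qs arbitrary: p v r)
  case Nil then show ?case by simp
next
  case (Cons q qs)
  show ?case
  proof (cases "length q < length p")
    case True
    then obtain p' where p': "p = q @ p'" using Cons(2)
      by (metis append_eq_append_conv_if append_eq_conv_conj concat.simps(2) less_imp_le_nat)
    then have "concat qs = p' @ v" using Cons(2) by simp
    then have "length (filter (\<lambda>q. \<not>(\<exists>r. per u q r)) qs) \<le> length p'"
      using Cons by auto
    moreover have "length q \<ge> 1" using Cons(4) by (cases q) auto
    ultimately show ?thesis using p' by auto
  next
    case False
    then obtain s where s: "q = p @ s" "v = s @ concat qs" using Cons(2)
      by (metis append_eq_append_conv_if append_eq_conv_conj concat.simps(2) not_less)
    then have "per u (concat qs) (r + length s)" using Cons(3) by (simp add: per_append)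
    then have "\<forall>q'\<in>set qs. \<exists>r. per u q' r" using per_concat by blast
    then have "filter (\<lambda>q. \<not>(\<exists>r. per u q r)) qs = []" by (simp add: filter_empty_conv)
    moreover have "length p \<ge> 1 \<or> (\<exists>r. per u q r)"
    proof (cases "p = []")
      case True
      then have "per u q r" using s Cons(3) by (simp add: per_append)
      then show ?thesis by blast
    next
      case False then show ?thesis by (cases p) auto
    qed
    ultimately show ?thesis by auto
  qed
qed

lemma long_count: "(J + 1) * length (filter (\<lambda>q. J < length q) qs) \<le> length (concat qs)"
  by (induct qs) auto

lemma short_count:
  assumes "distinct (butlast qs)" "u \<noteq> []"
  shows "length (filter (\<lambda>q. (\<exists>r. per u q r) \<and> length q \<le> J) qs) \<le> length u * (J + 1) + 1"
proof -
  let ?P = "\<lambda>q. (\<exists>r. per u q r) \<and> length q \<le> J"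
  have "length (filter ?P qs) \<le> length (filter ?P (butlast qs)) + 1"
  proof (cases "qs = []")
    case True then show ?thesis by simp
  next
    case False
    then have "qs = butlast qs @ [last qs]" by simp
    then have "filter ?P qs = filter ?P (butlast qs) @ filter ?P [last qs]" by (metis filter_append)
    then show ?thesis by auto
  qed
  also have "length (filter ?P (butlast qs)) = card (set (filter ?P (butlast qs)))"
    using assms(1) by (simp add: distinct_card[symmetric] del: set_filter)
  also have "card (set (filter ?P (butlast qs))) \<le> card {v. ?P v}"
    by (rule card_mono[OF finite_short_per[OF assms(2)]]) auto
  also have "\<dots> \<le> length u * (J + 1)" by (rule card_short_per[OF assms(2)])
  finally show ?thesis by simp
qed

lemma len_filter3: "(\<And>x. A x \<or> B x \<or> C x) \<Longrightarrow>
  length xs \<le> length (filter A xs) + length (filter B xs) + length (filter C xs)"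
proof (induct xs)
  case Nil then show ?case by simp
next
  case (Cons a xs)
  then have "A a \<or> B a \<or> C a" by blast
  then show ?case using Cons by auto
qed

lemma phrase_count:
  assumes "concat qs = p @ v" "per u v r" "\<forall>q\<in>set qs. q \<noteq> []" "distinct (butlast qs)" "u \<noteq> []"
  shows "(J + 1) * length qs \<le> (J + 1) * (length p + length u * (J + 1) + 1) + length (concat qs)"
proof -
  let ?N = "\<lambda>q. \<not>(\<exists>r. per u q r)"
  let ?S = "\<lambda>q. (\<exists>r. per u q r) \<and> length q \<le> J"
  let ?L = "\<lambda>q. J < length q"
  have "length qs \<le> length (filter ?N qs) + length (filter ?S qs) + length (filter ?L qs)"
    by (rule len_filter3) auto
  from mult_le_mono2[OF this, of "J+1"]
  have "(J+1) * length qs \<le> (J+1) * (length (filter ?N qs) + length (filter ?S qs)) + (J+1) * length (filter ?L qs)"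
    by (simp only: distrib_left)
  also have "\<dots> \<le> (J+1) * (length p + (length u * (J + 1) + 1)) + length (concat qs)"
  proof -
    have "length (filter ?N qs) + length (filter ?S qs) \<le> length p + (length u * (J + 1) + 1)"
      using nonper_count[OF assms(1-3)] short_count[OF assms(4,5), of J] by (rule add_mono)
    then show ?thesis using long_count[of J qs] by (rule add_mono[OF mult_le_mono2])
  qed
  finally show ?thesis by (simp add: add.assoc)
qed

lemma per_rep: "per u (concat (replicate N u)) 0"
proof (induct N)
  case 0 then show ?case by (simp add: per_def)
next
  case (Suc N)
  have "per u u 0" by (simp add: per_def)
  moreover have "per u (concat (replicate N u)) (0 + length u)"
    using Suc unfolding per_def by (simp add: mod_add_left_eq[symmetric])
  ultimately show ?case by (simp add: per_append)
qed


lemma exp_ineq: "11 \<le> e \<Longrightarrow> 24 * (4 * e + 1) \<le> (2::nat)^e"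
proof (induct e rule: dec_induct)
  case base then show ?case by simp
next
  case (step n) then show ?case by simp
qed

lemma exp_ineq2: "3 * A * A < (2::nat)^(2 * A + 11)"
proof -
  have "A < 2^A" by (rule less_exp)
  then have "A * A < 2^A * 2^A" by (simp add: mult_strict_mono')
  also have "\<dots> = 2^(2*A)" by (simp add: power_add[symmetric] mult_2)
  finally have "3 * A * A \<le> 3 * 2^(2*A)" by simp
  also have "\<dots> < 2^(2*A) * 2^11" by simp
  also have "\<dots> = 2^(2*A+11)" by (simp add: power_add)
  finally show ?thesis .
qed

lemma LZ_periodic:
  assumes u: "u \<noteq> []" and x: "x = p @ concat (replicate N u)"
    and A: "A = length p + length u + 1" and e: "e = 2 * A + 11" and N: "N = (A * 2^e) * (A * 2^e)"
  shows "8 * length (LZ x) \<le> N"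
proof -
  let ?R = "A * 2^e"
  let ?qs = "lz_phr (length x) [] x"
  have R0: "0 < ?R" using A by simp
  then have R1: "?R \<ge> 1" by linarith
  have cc: "concat ?qs = x" by (rule lz_concat) simp
  have ne: "\<forall>q\<in>set ?qs. q \<noteq> []" using lz_nonempty by blast
  have di: "distinct (butlast ?qs)" using lz_distinct by blast
  have pr: "per u (concat (replicate N u)) 0" by (rule per_rep)
  have lx: "length x = length p + N * length u" using x by (simp add: length_concat sum_list_replicate)
  have "(?R - 1 + 1) * length ?qs \<le> (?R - 1 + 1) * (length p + length u * (?R - 1 + 1) + 1) + length (concat ?qs)"
    by (rule phrase_count[OF _ pr ne di u]) (subst cc, rule x)
  moreover have RR: "?R - 1 + 1 = ?R" using R1 by simp
  ultimately have "?R * length ?qs \<le> ?R * (length p + length u * ?R + 1) + length x"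
    using cc by (simp only: RR)
  then have "?R * length ?qs \<le> ?R * (length p + length u * ?R + 1) + length p + N * length u"
    using lx by simp
  also have "\<dots> \<le> ?R * (length p + length u * ?R + 1) + ?R * length p + ?R * (?R * length u)"
    using R1 N by simp
  also have "\<dots> = ?R * (2 * length p + 2 * length u * ?R + 1)" by (simp add: algebra_simps)
  finally have "?R * length ?qs \<le> ?R * (2 * length p + 2 * length u * ?R + 1)" .
  then have c1: "length ?qs \<le> 2 * length p + 2 * length u * ?R + 1" using nat_mult_le_cancel1[OF R0] by blast
  also have "\<dots> \<le> 3 * A * ?R"
  proof -
    have "length p \<le> length p * ?R" using R1 by simp
    moreover have "3 * A * ?R = 3 * (length p * ?R) + 3 * (length u * ?R) + 3 * ?R" using A by (simp add: algebra_simps)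
    moreover have "2 * length u * ?R = 2 * (length u * ?R)" by simp
    ultimately show ?thesis using R1 by linarith
  qed
  finally have c2: "length ?qs \<le> 3 * A * A * 2^e" by (simp add: mult.assoc)
  have "3 * A * A < 2^e" using exp_ineq2[of A] e by simp
  then have "3 * A * A * 2^e < 2^e * 2^e" by simp
  then have c3: "length ?qs < 2^(2*e)" using c2 by (simp add: power_add[symmetric] mult_2)
  have "length (LZ x) \<le> length ?qs * (2 * (2*e) + 1)" by (rule LZ_bound[OF c3])
  also have "\<dots> \<le> (3 * A * A * 2^e) * (2 * (2*e) + 1)" using c2 by (rule mult_le_mono1)
  finally have "8 * length (LZ x) \<le> 8 * (3 * A * A * 2^e) * (4 * e + 1)" by simp
  also have "\<dots> = A * A * 2^e * (24 * (4 * e + 1))" by (simp add: algebra_simps)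
  also have "\<dots> \<le> A * A * 2^e * 2^e" using exp_ineq[of e] e by (intro mult_le_mono2) simp
  also have "\<dots> = N" using N by (simp add: algebra_simps)
  finally show ?thesis .
qed


definition bv :: "bool list \<Rightarrow> nat" where
  "bv l = foldl (\<lambda>a b. 2 * a + (if b then 1 else 0)) 1 l"

lemma bv_snoc: "bv (l @ [b]) = 2 * bv l + (if b then 1 else 0)"
  by (simp add: bv_def)

lemma bv_pos: "1 \<le> bv l"
proof (induct l rule: rev_induct)
  case Nil then show ?case by (simp add: bv_def)
next
  case (snoc b l) then show ?case by (simp add: bv_snoc)
qed

lemma bin_bv: "bin (bv l) = True # l"
proof (induct l rule: rev_induct)
  case Nil then show ?case by (simp add: bv_def bin.simps[of 1] bin.simps[of "Suc 0"])
next
  case (snoc b l)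
  have p: "1 \<le> bv l" by (rule bv_pos)
  let ?n = "2 * bv l + (if b then 1 else 0)"
  have e: "bin ?n = (if ?n \<le> 1 then [?n = 1] else bin (?n div 2) @ [?n mod 2 = 1])" by (rule bin.simps)
  have "\<not> ?n \<le> 1" using p by auto
  moreover have "?n div 2 = bv l" by auto
  moreover have "(?n mod 2 = 1) = b" by auto
  ultimately have "bin ?n = bin (bv l) @ [b]" using e by presburger
  then show ?case using snoc by (simp add: bv_snoc)
qed

lemma str_bv: "str (bv l) = l"
  unfolding str_def bin_bv by (rule list.sel(3))

lemma describes_exists: "wf_fst T \<Longrightarrow> \<exists>y. describes y T"
proof -
  assume wf: "wf_fst T"
  let ?m = "nstates T"
  let ?ns = "map (\<lambda>j. delta T (j div 2) (odd j) + ?m) [0..<2 * ?m]"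
  let ?ns' = "map (\<lambda>j. bv (nu T (j div 2) (odd j))) [0..<2 * ?m]"
  have "\<forall>j < 2 * ?m. 1 \<le> ?ns ! j \<and> 1 \<le> ?ns' ! j \<and>
            delta T (j div 2) (odd j) = (?ns ! j) mod ?m \<and>
            nu T (j div 2) (odd j) = str (?ns' ! j)"
  (is "?H")
  proof (intro allI impI)
    fix j assume j: "j < 2 * ?m"
    then have "delta T (j div 2) (odd j) < ?m" using wf by (auto simp: wf_fst_def)
    then show "1 \<le> ?ns ! j \<and> 1 \<le> ?ns' ! j \<and>
            delta T (j div 2) (odd j) = (?ns ! j) mod ?m \<and>
            nu T (j div 2) (odd j) = str (?ns' ! j)"
      using j bv_pos by (simp add: str_bv)
  qed
  then have "describes (dbl (bin (start T + 1)) @ [False, True] @ concat (map (table_entry T ?ns ?ns') [0..<2 * nstates T])) T"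
    unfolding describes_def
    apply (rule_tac conjI[OF wf])
    apply (rule exI[of _ ?ns], rule exI[of _ ?ns'])
    apply (simp only: length_map length_upt)
    apply simp
    done
  then show ?thesis by blast
qed

lemma fst_size_ex: "wf_fst T \<Longrightarrow> \<exists>y. describes y T \<and> length y = fst_size T"
proof -
  assume "wf_fst T"
  then obtain y where "describes y T" using describes_exists by blast
  then show ?thesis unfolding fst_size_def using LeastI_ex[of "\<lambda>l. \<exists>y. describes y T \<and> length y = l"] by blast
qed

lemma in_FST_le: "wf_fst T \<Longrightarrow> T \<in> FST_le (fst_size T)"
  using describes_exists by (auto simp: FST_le_def)

lemma len_diam: "length (diam l) = 2 * length l + 2"
  by (simp add: diam_def len_dag)

lemma len_concat_ge: "j \<in> set js \<Longrightarrow> length (f j) \<le> length (concat (map f js))"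
  by (induct js) auto

lemma len_concat_ge2: "(\<And>j. j \<in> set js \<Longrightarrow> 1 \<le> length (f j)) \<Longrightarrow> length js \<le> length (concat (map f js))"
proof (induct js)
  case Nil then show ?case by simp
next
  case (Cons a js)
  have 1: "1 \<le> length (f a)" using Cons.prems by simp
  have "length js \<le> length (concat (map f js))" using Cons by simp
  then show ?case using 1 by simp
qed

lemma describes_bounds:
  assumes "describes y T"
  shows "nstates T \<le> length y" "\<And>q b. q < nstates T \<Longrightarrow> length (nu T q b) \<le> length y"
proof -
  obtain ns ns' where h: "length ns = 2 * nstates T" "length ns' = 2 * nstates T"
     "\<forall>j < 2 * nstates T. 1 \<le> ns ! j \<and> 1 \<le> ns' ! j \<and>
            delta T (j div 2) (odd j) = (ns ! j) mod nstates T \<and>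
            nu T (j div 2) (odd j) = str (ns' ! j)"
     "y = dbl (bin (start T + 1)) @ [False, True] @ concat (map (table_entry T ns ns') [0..<2 * nstates T])"
    using assms unfolding describes_def by blast
  have te: "j < 2 * nstates T \<Longrightarrow> 2 * length (nu T (j div 2) (odd j)) + 2 \<le> length (table_entry T ns ns' j)" for j
    using h(3) by (auto simp: table_entry_def Let_def len_diam)
  have "2 * nstates T \<le> length (concat (map (table_entry T ns ns') [0..<2 * nstates T]))"
    using len_concat_ge2[of "[0..<2 * nstates T]" "table_entry T ns ns'"] te by fastforce
  then show "nstates T \<le> length y" using h(4) by simp
  fix q b assume q: "q < nstates T"
  let ?j = "2 * q + (if b then 1 else 0)"
  have j: "?j < 2 * nstates T" "?j div 2 = q" "odd ?j = b" using q by auto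
  have "length (table_entry T ns ns' ?j) \<le> length (concat (map (table_entry T ns ns') [0..<2 * nstates T]))"
    using j by (intro len_concat_ge) auto
  then show "length (nu T q b) \<le> length y" using te[OF j(1)] j h(4) by simp
qed

lemma FST_le_bnd: "T \<in> FST_le k \<Longrightarrow> T \<in> bnd_set k"
proof -
  assume "T \<in> FST_le k"
  then obtain y0 where y0: "describes y0 T" and s: "fst_size T \<le> k" by (auto simp: FST_le_def)
  have wf: "wf_fst T" using y0 by (simp add: describes_def)
  obtain y where y: "describes y T" "length y = fst_size T" using fst_size_ex[OF wf] by blast
  have "nstates T \<le> k" using describes_bounds(1)[OF y(1)] y(2) s by simp
  moreover have "\<forall>q<nstates T. \<forall>b. length (nu T q b) \<le> k"
  proof (intro allI impI)
    fix q b assume q: "q < nstates T"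
    have "length (nu T q b) \<le> length y" using describes_bounds(2)[OF y(1) q] .
    then show "length (nu T q b) \<le> k" using y(2) s by simp
  qed
  ultimately show ?thesis using wf unfolding bnd_set_def by simp
qed


lemma drop_take_app: "p \<le> m \<Longrightarrow> m \<le> n \<Longrightarrow> drop p (take m x) @ drop m (take n x) = drop p (take n x)"
proof -
  assume a: "p \<le> m" "m \<le> n"
  have "take n x = take m x @ drop m (take n x)" using a
    by (metis append_take_drop_id min.absorb1 take_take)
  then have "drop p (take n x) = drop p (take m x @ drop m (take n x))" by simp
  also have "\<dots> = drop p (take m x) @ drop m (take n x)"
  proof (cases "m \<le> length x")
    case True then show ?thesis using a by simp
  next
    case False then show ?thesis using a by simp
  qed
  finally show ?thesis by simp
qed

locale genrun =
  fixes T :: fst and k :: nat and q0 :: nat and y :: "bool list"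
  assumes wf: "wf_fst T" and nub: "\<And>q b. q < nstates T \<Longrightarrow> length (nu T q b) \<le> k"
    and q0: "q0 < nstates T"
begin

definition a :: "nat \<Rightarrow> nat" where "a i = length (outf T q0 (take i y))"
definition x :: "bool list" where "x = outf T q0 y"

lemma seg: "i \<le> j \<Longrightarrow> outf T q0 (take j y) = outf T q0 (take i y) @ outf T (stf T q0 (take i y)) (drop i (take j y))"
proof -
  assume "i \<le> j"
  then have "take j y = take i y @ drop i (take j y)"
    by (metis append_take_drop_id min.absorb1 take_take)
  then show ?thesis using outf_append by metis
qed

lemma a_mono: "i \<le> j \<Longrightarrow> a i \<le> a j"
  using seg by (simp add: a_def)

lemma a_step: "i < length y \<Longrightarrow> a (Suc i) \<le> a i + k"
proof -
  assume i: "i < length y"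
  have "take (Suc i) y = take i y @ [y ! i]" using i by (simp add: take_Suc_conv_app_nth)
  moreover have "stf T q0 (take i y) < nstates T" using stf_lt[OF wf q0] .
  ultimately show ?thesis using nub by (simp add: a_def)
qed

lemma a_len: "a (length y) = length x"
  by (simp add: a_def x_def)

lemma pref: "take (a i) x = outf T q0 (take i y)"
proof -
  have "x = outf T q0 (take i y) @ outf T (stf T q0 (take i y)) (drop i y)"
    unfolding x_def outf_append[symmetric] by simp
  then show ?thesis by (simp add: a_def)
qed

definition G :: "nat \<Rightarrow> nat" where "G p = (GREATEST i. i \<le> length y \<and> a i \<le> p)"

lemma G_props: "G p \<le> length y" "a (G p) \<le> p" "i \<le> length y \<Longrightarrow> a i \<le> p \<Longrightarrow> i \<le> G p"
proof -
  let ?P = "\<lambda>i. i \<le> length y \<and> a i \<le> p"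
  have p0: "?P 0" by (simp add: a_def)
  have b: "\<And>i. ?P i \<Longrightarrow> i \<le> length y" by simp
  have "?P (G p)" unfolding G_def by (rule GreatestI_nat[where P="?P", OF p0 b])
  then show "G p \<le> length y" "a (G p) \<le> p" by auto
  show "i \<le> length y \<Longrightarrow> a i \<le> p \<Longrightarrow> i \<le> G p"
    unfolding G_def by (rule Greatest_le_nat[where P="?P", OF _ b]) auto
qed

lemma G_low: "p \<le> length x \<Longrightarrow> p \<le> a (G p) + k"
proof -
  assume p: "p \<le> length x"
  show ?thesis
  proof (cases "G p = length y")
    case True then show ?thesis using p a_len by simp
  next
    case False
    then have lt: "G p < length y" using G_props(1)[of p] by simp
    have "\<not> a (Suc (G p)) \<le> p"
    proof
      assume "a (Suc (G p)) \<le> p"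
      then have "Suc (G p) \<le> G p" using G_props(3)[of "Suc (G p)" p] lt by simp
      then show False by simp
    qed
    then show ?thesis using a_step[OF lt] by simp
  qed
qed

lemma G_mono: "p \<le> p' \<Longrightarrow> G p \<le> G p'"
  using G_props(1,2)[of p] G_props(3)[of "G p" p'] by simp

lemma G_seg:
  assumes pl: "p + l \<le> length x" and kl: "k \<le> l"
  shows "\<exists>q s d b. q < nstates T \<and> length s = G (p + l) - G p \<and> d \<le> k \<and> length b \<le> k \<and>
           take l (drop p x) = drop d (outf T q s) @ b"
proof -
  let ?i = "G p" let ?j = "G (p + l)"
  have ij: "?i \<le> ?j" by (rule G_mono) simp
  let ?s = "drop ?i (take ?j y)"
  let ?q = "stf T q0 (take ?i y)"
  have q: "?q < nstates T" using stf_lt[OF wf q0] .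
  have ls: "length ?s = ?j - ?i" using G_props(1)[of "p+l"] by simp
  have ai: "a ?i \<le> p" "p \<le> a ?i + k" using G_props(2) G_low pl by auto
  have aj: "a ?j \<le> p + l" "p + l \<le> a ?j + k" using G_props(2) G_low pl by auto
  have "take (a ?j) x = take (a ?i) x @ outf T ?q ?s" using seg[OF ij] pref by simp
  moreover have "length (take (a ?i) x) = a ?i" using ai pl by simp
  ultimately have o: "outf T ?q ?s = drop (a ?i) (take (a ?j) x)"
    by (metis append_eq_conv_conj)
  have la: "a ?i \<le> length x" using ai pl by simp
  have "length (take (a ?i) x) = a ?i" using la by simp
  let ?d = "p - a ?i"
  let ?b = "drop (a ?j) (take (p + l) x)"
  have "drop ?d (outf T ?q ?s) = drop p (take (a ?j) x)"
    unfolding o using ai by simp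
  then have "drop ?d (outf T ?q ?s) @ ?b = drop p (take (p + l) x)"
    using drop_take_app[of p "a ?j" "p + l" x] aj kl by simp
  also have "\<dots> = take l (drop p x)" by (simp add: drop_take)
  finally have e: "take l (drop p x) = drop ?d (outf T ?q ?s) @ ?b" by simp
  have "length ?b \<le> k" using aj pl by simp
  then show ?thesis using e q ls ai by (intro exI[of _ ?q] exI[of _ ?s] exI[of _ ?d] exI[of _ ?b]) auto
qed

lemma drop_rep: "j \<le> N \<Longrightarrow> drop (j * length w) (concat (replicate N w)) = concat (replicate (N - j) w)"
proof (induct j arbitrary: N)
  case 0 then show ?case by simp
next
  case (Suc j)
  then obtain N' where N: "N = Suc N'" by (cases N) auto
  have "drop (Suc j * length w) (concat (replicate N w)) = drop (j * length w) (drop (length w) (w @ concat (replicate N' w)))"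
    using N by (simp add: add.commute)
  also have "\<dots> = concat (replicate (N' - j) w)" using Suc N by simp
  finally show ?case using N by simp
qed

lemma copies_lower:
  assumes xe: "x = P @ concat (replicate N w) @ R" and kl: "k \<le> length w"
    and good: "\<And>q s d b. q < nstates T \<Longrightarrow> d \<le> k \<Longrightarrow> length b \<le> k \<Longrightarrow> length s \<le> L \<Longrightarrow> w \<noteq> drop d (outf T q s) @ b"
  shows "N * (L + 1) \<le> length y"
proof -
  have lx: "length x = length P + N * length w + length R" using xe by (simp add: length_concat sum_list_replicate)
  have "j \<le> N \<Longrightarrow> j * (L + 1) \<le> G (length P + j * length w)" for j
  proof (induct j)
    case 0 then show ?case by simp
  next
    case (Suc j)
    let ?p = "length P + j * length w"
    have pl: "?p + length w \<le> length x"
    proof -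
      have "Suc j * length w \<le> N * length w" using Suc(2) by (rule mult_le_mono1)
      then have "j * length w + length w \<le> N * length w" by simp
      then show ?thesis using lx by simp
    qed
    have tw: "take (length w) (drop ?p x) = w"
    proof -
      have "drop ?p x = drop (j * length w) (concat (replicate N w) @ R)" using xe by simp
      also have "\<dots> = concat (replicate (N - j) w) @ R" using drop_rep[of j N w] Suc(2)
        by (simp add: length_concat sum_list_replicate)
      finally show ?thesis using Suc(2) by (cases "N - j") auto
    qed
    obtain q s d b where h: "q < nstates T" "length s = G (?p + length w) - G ?p" "d \<le> k" "length b \<le> k"
      "take (length w) (drop ?p x) = drop d (outf T q s) @ b"
      using G_seg[OF pl kl] by blast
    have "\<not> length s \<le> L" using good[OF h(1,3,4)] h(5) tw by auto
    then have "G ?p + L + 1 \<le> G (?p + length w)" using h(2) by simp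
    moreover have "j * (L + 1) \<le> G ?p" using Suc by simp
    moreover have e: "length P + Suc j * length w = ?p + length w" by simp
    ultimately show ?case unfolding e by simp
  qed
  then have "N * (L + 1) \<le> G (length P + N * length w)" by simp
  also have "\<dots> \<le> length y" by (rule G_props(1))
  finally show ?thesis .
qed

end


definition BadB :: "nat \<Rightarrow> nat \<Rightarrow> bool list set" where
  "BadB k L = {w. \<exists>C\<in>canon ` bnd_set k. \<exists>q<nstates C. \<exists>s d b. length s \<le> L \<and> d \<le> k \<and> length b \<le> k \<and>
      w = drop d (outf C q s) @ b}"

lemma BadB_card: "finite (BadB k L) \<and> card (BadB k L) \<le> card (canon ` bnd_set k) * k * 2^(L+1) * (k+1) * 2^(k+1)"
proof -
  let ?F = "canon ` bnd_set k \<times> {..<k} \<times> {s::bool list. length s \<le> L} \<times> {..k} \<times> {b::bool list. length b \<le> k}"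
  let ?f = "\<lambda>(C,q,s,d,b). drop d (outf C q s) @ b"
  have sub: "BadB k L \<subseteq> ?f ` ?F"
  proof
    fix w assume "w \<in> BadB k L"
    then obtain C q s d b where h: "C \<in> canon ` bnd_set k" "q < nstates C" "length s \<le> L" "d \<le> k" "length b \<le> k"
      "w = drop d (outf C q s) @ b" unfolding BadB_def by blast
    have "nstates C \<le> k" using h(1) by (auto simp: bnd_set_def)
    then have "(C,q,s,d,b) \<in> ?F" using h by auto
    then show "w \<in> ?f ` ?F" using h(6) by force
  qed
  have fF: "finite ?F" using finite_canon_bnd finite_short_lists by auto
  have "card (BadB k L) \<le> card (?f ` ?F)" using sub fF by (intro card_mono) auto
  also have "\<dots> \<le> card ?F" using fF by (rule card_image_le)
  also have "\<dots> = card (canon ` bnd_set k) * k * card {s::bool list. length s \<le> L} * (k+1) * card {b::bool list. length b \<le> k}"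
    by (simp only: card_cartesian_product card_lessThan card_atMost mult.assoc Suc_eq_plus1)
  also have "\<dots> \<le> card (canon ` bnd_set k) * k * 2^(L+1) * (k+1) * 2^(k+1)"
    using card_short_lists by (intro mult_le_mono mult_le_mono1) auto
  finally show ?thesis using sub fF finite_subset by blast
qed

definition MB :: "nat \<Rightarrow> nat" where "MB k = card (canon ` bnd_set k) * (k+1) * (k+1) * 2^(k+1) + k"
definition LB :: "nat \<Rightarrow> nat" where "LB k = 3 * (MB k + 1)"
definition lB :: "nat \<Rightarrow> nat" where "lB k = LB k + 1 + MB k"

lemma BadB_small: "card (BadB k (LB k)) < 2^(lB k)"
proof -
  have "card (BadB k (LB k)) \<le> card (canon ` bnd_set k) * k * 2^(LB k+1) * (k+1) * 2^(k+1)"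
    using BadB_card by blast
  also have "\<dots> = (card (canon ` bnd_set k) * k * (k+1) * 2^(k+1)) * 2^(LB k+1)" by (simp add: algebra_simps)
  also have "\<dots> \<le> MB k * 2^(LB k+1)"
  proof -
    have "card (canon ` bnd_set k) * k * (k+1) * 2^(k+1) \<le> card (canon ` bnd_set k) * (k+1) * (k+1) * 2^(k+1)"
      by (intro mult_le_mono1 mult_le_mono2) simp
    then have h: "card (canon ` bnd_set k) * k * (k+1) * 2^(k+1) \<le> MB k" unfolding MB_def by linarith
    show ?thesis using mult_le_mono1[OF h] .
  qed
  also have "\<dots> < 2^(MB k) * 2^(LB k+1)" by simp
  also have "\<dots> = 2^(lB k)" by (simp add: lB_def power_add[symmetric] algebra_simps)
  finally show ?thesis .
qed

definition wB :: "nat \<Rightarrow> bool list" where "wB k = (SOME w. length w = lB k \<and> w \<notin> BadB k (LB k))"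

lemma wB_props: "length (wB k) = lB k" "wB k \<notin> BadB k (LB k)"
proof -
  have "\<exists>w. length w = lB k \<and> w \<notin> BadB k (LB k)"
    using exists_avoid[of "BadB k (LB k)" "lB k"] BadB_card BadB_small by blast
  then show "length (wB k) = lB k" "wB k \<notin> BadB k (LB k)" unfolding wB_def by (metis (mono_tags, lifting) someI_ex)+
qed

lemma Dk_lower_run:
  assumes T: "T \<in> FST_le k" and out: "fst_out T y = P @ concat (replicate N (wB k))"
  shows "N * (LB k + 1) \<le> length y"
proof -
  have Tb: "T \<in> bnd_set k" by (rule FST_le_bnd[OF T])
  then have wf: "wf_fst T" and nub: "\<And>q b. q < nstates T \<Longrightarrow> length (nu T q b) \<le> k"
    by (auto simp: bnd_set_def)
  have st: "start T < nstates T" using wf by (simp add: wf_fst_def)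
  interpret genrun T k "start T" y using wf nub st by unfold_locales auto
  have xe: "x = P @ concat (replicate N (wB k)) @ []" using out by (simp add: x_def fst_out_outf)
  have kl: "k \<le> length (wB k)" using wB_props(1) by (simp add: lB_def MB_def)
  show ?thesis
  proof (rule copies_lower[OF xe kl])
    fix q d and s b :: "bool list" assume h: "q < nstates T" "d \<le> k" "length b \<le> k" "length s \<le> LB k"
    show "wB k \<noteq> drop d (outf T q s) @ b"
    proof
      assume e: "wB k = drop d (outf T q s) @ b"
      have "outf (canon T) q s = outf T q s" using canon_run[OF wf h(1)] by simp
      then have e2: "wB k = drop d (outf (canon T) q s) @ b" using e by simp
      have c1: "canon T \<in> canon ` bnd_set k" using Tb by simp
      have c2: "q < nstates (canon T)" using h by simp
      have "wB k \<in> BadB k (LB k)" unfolding BadB_def using c1 c2 e2 h(2-4) by blast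
      then show False using wB_props(2) by simp
    qed
  qed
qed

definition CA :: "nat \<Rightarrow> fst set" where "CA i = canon ` (bnd_set i \<inter> Collect ILFST)"

lemma CA_finite: "finite (CA i)"
  unfolding CA_def using finite_canon_bnd[of i] by (rule finite_subset[rotated]) auto

definition BadA :: "nat \<Rightarrow> nat \<Rightarrow> nat \<Rightarrow> bool list set" where
  "BadA i L l = {u. length u = l \<and> (\<exists>C\<in>CA i. \<exists>q<i. (\<exists>z. fst_state C z = q) \<and> length (outf C q u) \<le> L)}"

lemma CA_props: "C \<in> CA i \<Longrightarrow> ILFST C \<and> nstates C \<le> i"
  unfolding CA_def bnd_set_def using canon_ILFST by auto

lemma BadA_card: "finite (BadA i L l) \<and> card (BadA i L l) \<le> card (CA i) * i * (2^(L+1) * i)"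
proof -
  let ?B = "\<lambda>C q. {u. length u = l \<and> (\<exists>z. fst_state C z = q) \<and> length (outf C q u) \<le> L}"
  have sub: "BadA i L l \<subseteq> (\<Union>C\<in>CA i. \<Union>q\<in>{..<i}. ?B C q)" unfolding BadA_def by blast
  have fin: "finite (BadA i L l)"
    by (rule finite_subset[OF _ finite_len_lists[of l]]) (auto simp: BadA_def)
  have "card (BadA i L l) \<le> card (\<Union>C\<in>CA i. \<Union>q\<in>{..<i}. ?B C q)"
  proof (rule card_mono[OF _ sub])
    show "finite (\<Union>C\<in>CA i. \<Union>q\<in>{..<i}. ?B C q)"
      by (rule finite_subset[OF _ finite_len_lists[of l]]) auto
  qed
  also have "\<dots> \<le> (\<Sum>C\<in>CA i. card (\<Union>q\<in>{..<i}. ?B C q))" by (rule card_UN_le[OF CA_finite])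
  also have "\<dots> \<le> (\<Sum>C\<in>CA i. (\<Sum>q\<in>{..<i}. card (?B C q)))"
    by (intro sum_mono card_UN_le) auto
  also have "\<dots> \<le> (\<Sum>C\<in>CA i. (\<Sum>q\<in>{..<i}. 2^(L+1) * i))"
  proof (intro sum_mono)
    fix C q assume "C \<in> CA i"
    then show "card (?B C q) \<le> 2^(L+1) * i" using CA_props ILFST_reach_count by blast
  qed
  also have "\<dots> = card (CA i) * i * (2^(L+1) * i)" by simp
  finally show ?thesis using fin by simp
qed

definition MA :: "nat \<Rightarrow> nat" where "MA i = card (CA i) * i * i + i"
definition LA :: "nat \<Rightarrow> nat" where "LA i = 3 * (MA i + 1)"
definition lA :: "nat \<Rightarrow> nat" where "lA i = LA i + 1 + MA i"

lemma BadA_small: "card (BadA i (LA i) (lA i)) < 2^(lA i)"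
proof -
  have "card (BadA i (LA i) (lA i)) \<le> card (CA i) * i * (2^(LA i+1) * i)" using BadA_card by blast
  also have "\<dots> = (card (CA i) * i * i) * 2^(LA i+1)" by (simp add: algebra_simps)
  also have "\<dots> \<le> MA i * 2^(LA i+1)" unfolding MA_def by (intro mult_le_mono1) simp
  also have "\<dots> < 2^(MA i) * 2^(LA i+1)" by simp
  also have "\<dots> = 2^(lA i)" by (simp add: lA_def power_add[symmetric] algebra_simps)
  finally show ?thesis .
qed

definition uA :: "nat \<Rightarrow> bool list" where "uA i = (SOME u. length u = lA i \<and> u \<notin> BadA i (LA i) (lA i))"

lemma uA_props: "length (uA i) = lA i" "uA i \<notin> BadA i (LA i) (lA i)"
proof -
  have "\<exists>u. length u = lA i \<and> u \<notin> BadA i (LA i) (lA i)"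
    using exists_avoid[of "BadA i (LA i) (lA i)" "lA i"] BadA_card BadA_small by blast
  then show "length (uA i) = lA i" "uA i \<notin> BadA i (LA i) (lA i)" unfolding uA_def by (metis (mono_tags, lifting) someI_ex)+
qed

lemma A_lower:
  assumes C: "ILFST C" "C \<in> bnd_set i"
  shows "N * (LA i + 1) \<le> length (outf C (fst_state C z) (concat (replicate N (uA i))))"
proof (induct N arbitrary: z)
  case 0 then show ?case by simp
next
  case (Suc N)
  have wf: "wf_fst C" using C by (simp add: ILFST_def)
  let ?q = "fst_state C z"
  have q: "?q < nstates C" using stf_lt[OF wf, of "start C" z] wf by (simp add: fst_state_stf wf_fst_def)
  have one: "LA i + 1 \<le> length (outf C ?q (uA i))"
  proof (rule ccontr)
    assume "\<not> ?thesis"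
    then have sh: "length (outf (canon C) ?q (uA i)) \<le> LA i" using canon_run[OF wf q] by simp
    have "canon C \<in> CA i" using C unfolding CA_def by auto
    moreover have "fst_state (canon C) z = ?q" using canon_fst_out[OF wf] by simp
    moreover have "?q < i" using q C by (simp add: bnd_set_def)
    ultimately have "uA i \<in> BadA i (LA i) (lA i)" unfolding BadA_def using sh uA_props(1) by blast
    then show False using uA_props(2) by simp
  qed
  have st: "stf C ?q (uA i) = fst_state C (z @ uA i)" by (simp add: fst_state_stf)
  have "length (outf C ?q (concat (replicate (Suc N) (uA i)))) =
        length (outf C ?q (uA i)) + length (outf C (fst_state C (z @ uA i)) (concat (replicate N (uA i))))"
    using st by simp
  then show ?case using one Suc[of "z @ uA i"] by simp
qed


definition Zm :: "nat \<Rightarrow> fst" where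
  "Zm m = \<lparr>nstates = m, start = 0,
     delta = (\<lambda>q b. if b then 0 else (if Suc q = m then 0 else Suc q)),
     nu = (\<lambda>q b. if b then replicate (Suc q) True @ [False] else (if Suc q = m then [False] else []))\<rparr>"

fun dec :: "nat \<Rightarrow> bool list \<Rightarrow> bool list" where
  "dec m [] = []"
| "dec m (False # r) = replicate m False @ dec m r"
| "dec m (True # r) = replicate (length (takeWhile id r)) False @ [True] @ dec m (drop (Suc (length (takeWhile id r))) r)"

lemma Zm_simps[simp]: "nstates (Zm m) = m" "start (Zm m) = 0"
  "delta (Zm m) q b = (if b then 0 else (if Suc q = m then 0 else Suc q))"
  "nu (Zm m) q b = (if b then replicate (Suc q) True @ [False] else (if Suc q = m then [False] else []))"
  by (simp_all add: Zm_def)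

lemma Zm_wf: "0 < m \<Longrightarrow> wf_fst (Zm m)"
  by (auto simp: wf_fst_def)



lemma dec_rep: "dec m (True # replicate q True @ False # r) = replicate q False @ [True] @ dec m r"
proof -
  have "takeWhile id (replicate q True @ False # r) = replicate q True"
    by (induct q) auto
  then show ?thesis by simp
qed

lemma Zm_dec: "q < m \<Longrightarrow> replicate q False @ x = dec m (outf (Zm m) q x) @ replicate (stf (Zm m) q x) False"
proof (induct x arbitrary: q)
  case Nil then show ?case by simp
next
  case (Cons b x)
  show ?case
  proof (cases b)
    case True
    have m: "0 < m" using Cons(2) by simp
    have "dec m (outf (Zm m) q (b # x)) = dec m (True # replicate q True @ False # outf (Zm m) 0 x)"
      using True by simp
    also have "\<dots> = replicate q False @ [True] @ dec m (outf (Zm m) 0 x)" by (rule dec_rep)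
    finally show ?thesis using Cons(1)[of 0] m True by simp
  next
    case False
    show ?thesis
    proof (cases "Suc q = m")
      case True
      then have "dec m (outf (Zm m) q (b # x)) = replicate m False @ dec m (outf (Zm m) 0 x)"
        using False by simp
      moreover have "stf (Zm m) q (b # x) = stf (Zm m) 0 x" using False True by simp
      moreover have "replicate q False @ b # x = replicate m False @ x"
      proof -
        have "replicate q False @ False # x = replicate (Suc q) False @ x" by (simp add: replicate_app_Cons_same)
        then show ?thesis using False True by simp
      qed
      ultimately show ?thesis using Cons(1)[of 0] True by simp
    next
      case F2: False
      then have "Suc q < m" using Cons(2) by simp
      then have "replicate (Suc q) False @ x = dec m (outf (Zm m) (Suc q) x) @ replicate (stf (Zm m) (Suc q) x) False"
        by (rule Cons(1))
      then show ?thesis using False F2 by (simp add: replicate_append_same[symmetric])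
    qed
  qed
qed

lemma Zm_ILFST: "0 < m \<Longrightarrow> ILFST (Zm m)"
proof -
  assume m: "0 < m"
  have "inj (\<lambda>x. (fst_out (Zm m) x, fst_state (Zm m) x))"
  proof (rule injI)
    fix x x' assume "(fst_out (Zm m) x, fst_state (Zm m) x) = (fst_out (Zm m) x', fst_state (Zm m) x')"
    then have e: "outf (Zm m) 0 x = outf (Zm m) 0 x'" "stf (Zm m) 0 x = stf (Zm m) 0 x'"
      by (auto simp: fst_out_outf fst_state_stf)
    have "x = dec m (outf (Zm m) 0 x) @ replicate (stf (Zm m) 0 x) False" using Zm_dec[OF m, of x] by simp
    also have "\<dots> = x'" using Zm_dec[OF m, of x'] e by simp
    finally show "x = x'" .
  qed
  then show ?thesis using Zm_wf[OF m] by (simp add: ILFST_def)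
qed

lemma Zm_len: "q < m \<Longrightarrow> length (outf (Zm m) q x) \<le> (m + 1) * length x"
proof (induct x arbitrary: q)
  case Nil then show ?case by simp
next
  case (Cons b x)
  have "length (nu (Zm m) q b) \<le> m + 1" using Cons(2) by auto
  moreover have "delta (Zm m) q b < m" using Cons(2) by auto
  ultimately show ?case using Cons(1)[of "delta (Zm m) q b"] by simp
qed

lemma Zm_zeros: "q < m \<Longrightarrow> length (outf (Zm m) q (replicate n False)) = (q + n) div m"
proof (induct n arbitrary: q)
  case 0 then show ?case by simp
next
  case (Suc n)
  show ?case
  proof (cases "Suc q = m")
    case True
    then have "length (outf (Zm m) q (replicate (Suc n) False)) = n div m + 1"
      using Suc(1)[of 0] Suc(2) by simp
    also have "\<dots> = (m + n) div m" using Suc(2) by (simp add: div_add_self1)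
    also have "m + n = q + Suc n" using True by simp
    finally show ?thesis .
  next
    case False
    then have "length (outf (Zm m) q (replicate (Suc n) False)) = (Suc q + n) div m"
      using Suc(1)[of "Suc q"] Suc(2) by simp
    then show ?thesis by simp
  qed
qed

definition Tw :: "bool list \<Rightarrow> fst" where
  "Tw w = \<lparr>nstates = 3, start = 0,
     delta = (\<lambda>q b. if q = 0 then (if b then 2 else 1) else if q = 1 then 0 else 2),
     nu = (\<lambda>q b. if q = 1 then [b] else if q = 2 then w else [])\<rparr>"

lemma Tw_wf: "wf_fst (Tw w)"
  by (auto simp: wf_fst_def Tw_def)

definition enc :: "bool list \<Rightarrow> bool list" where "enc P = concat (map (\<lambda>b. [False, b]) P)"

lemma Tw_enc: "outf (Tw w) 0 (enc P) = P \<and> stf (Tw w) 0 (enc P) = 0"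
  by (induct P) (auto simp: enc_def Tw_def)

lemma Tw_rep: "outf (Tw w) 2 (replicate N True) = concat (replicate N w)"
  by (induct N) (auto simp: Tw_def)

lemma Tw_out: "fst_out (Tw w) (enc P @ [True] @ replicate N True) = P @ concat (replicate N w)"
proof -
  have "outf (Tw w) 0 [True] = []" "stf (Tw w) 0 [True] = 2" by (auto simp: Tw_def)
  then show ?thesis using Tw_enc[of w P] Tw_rep[of w N] by (simp add: fst_out_outf Tw_def)
qed

lemma len_enc: "length (enc P) = 2 * length P"
  by (induct P) (auto simp: enc_def)

lemma Dk_upper: "T \<in> FST_le k \<Longrightarrow> fst_out T y = x \<Longrightarrow> Dk k x \<le> enat (length y)"
  unfolding Dk_def by (rule INF_lower) blast

lemma Dk_Tw: "Dk (fst_size (Tw w)) (P @ concat (replicate N w)) \<le> enat (2 * length P + 1 + N)"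
proof -
  have "Dk (fst_size (Tw w)) (P @ concat (replicate N w)) \<le> enat (length (enc P @ [True] @ replicate N True))"
    by (rule Dk_upper[OF in_FST_le[OF Tw_wf] Tw_out])
  then show ?thesis by (simp add: len_enc)
qed

lemma Dk_lower: "(\<And>T y. T \<in> FST_le k \<Longrightarrow> fst_out T y = x \<Longrightarrow> B \<le> length y) \<Longrightarrow> enat B \<le> Dk k x"
  unfolding Dk_def by (rule INF_greatest) auto


definition kidx :: "nat \<Rightarrow> nat" where "kidx i = fst (prod_decode i)"

definition NA :: "nat \<Rightarrow> bool list \<Rightarrow> nat" where
  "NA i p = (let A = length p + lA i + 1; e = 2 * A + 11 in (A * 2^e) * (A * 2^e))"
definition pA :: "nat \<Rightarrow> bool list \<Rightarrow> bool list" where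
  "pA i p = p @ concat (replicate (NA i p) (uA i))"
definition NB :: "nat \<Rightarrow> bool list \<Rightarrow> nat" where
  "NB i p = 5 * length (pA i p) + 2"
definition pB :: "nat \<Rightarrow> bool list \<Rightarrow> bool list" where
  "pB i p = pA i p @ concat (replicate (NB i p) (wB (kidx i)))"
definition ZC :: "nat \<Rightarrow> bool list \<Rightarrow> nat" where
  "ZC i p = (i + 1) * (length (pB i p) + 1)"

primrec pre :: "nat \<Rightarrow> bool list" where
  "pre 0 = []"
| "pre (Suc i) = pB i (pre i) @ replicate (ZC i (pre i)) False"

definition Sq :: "nat \<Rightarrow> bool" where "Sq n = pre (Suc n) ! n"

lemma pre_mono: "i \<le> j \<Longrightarrow> \<exists>r. pre j = pre i @ r"
proof (induct j rule: dec_induct)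
  case base then show ?case by simp
next
  case (step j)
  then obtain r where "pre j = pre i @ r" by blast
  then show ?case by (simp add: pB_def pA_def)
qed

lemma len_pre: "i \<le> length (pre i)"
proof (induct i)
  case 0 then show ?case by simp
next
  case (Suc i)
  have "1 \<le> ZC i (pre i)" by (simp add: ZC_def)
  then show ?case using Suc by (simp add: pB_def pA_def)
qed

lemma prefix_Sq: assumes "pre j = xs @ r" shows "prefix Sq (length xs) = xs"
proof -
  have "Sq m = xs ! m" if m: "m < length xs" for m
  proof (cases "Suc m \<le> j")
    case True
    then obtain r' where r': "pre j = pre (Suc m) @ r'" using pre_mono by blast
    have "m < length (pre (Suc m))" using len_pre[of "Suc m"] by simp
    then have "pre j ! m = pre (Suc m) ! m" using r' by (simp add: nth_append del: pre.simps)
    moreover have "pre j ! m = xs ! m" using assms m by (simp add: nth_append)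
    ultimately show ?thesis by (simp add: Sq_def)
  next
    case False
    then obtain r' where r': "pre (Suc m) = pre j @ r'" using pre_mono[of j "Suc m"] by auto
    have "m < length (pre j)" using assms m by simp
    then have "pre (Suc m) ! m = pre j ! m" using r' by (simp add: nth_append del: pre.simps)
    then show ?thesis using assms m by (simp add: Sq_def nth_append)
  qed
  then show ?thesis unfolding prefix_def by (intro nth_equalityI) auto
qed

lemma pre_Suc_eq: "pre (Suc i) = pA i (pre i) @ (concat (replicate (NB i (pre i)) (wB (kidx i))) @ replicate (ZC i (pre i)) False)"
  by (simp add: pB_def)

lemma prefix_pA: "prefix Sq (length (pA i (pre i))) = pA i (pre i)"
  by (rule prefix_Sq[OF pre_Suc_eq])

lemma prefix_pB: "prefix Sq (length (pB i (pre i))) = pB i (pre i)"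
  by (rule prefix_Sq[of "Suc i"]) simp

lemma prefix_pre: "prefix Sq (length (pre i)) = pre i"
  by (rule prefix_Sq[of i _ "[]"]) simp

lemma len_pA: "length (pre i) \<le> length (pA i (pre i))"
  by (simp add: pA_def)
lemma len_pB: "length (pA i (pre i)) \<le> length (pB i (pre i))"
  by (simp add: pB_def)


lemma C_bound:
  assumes m: "0 < m"
  shows "real (length (fst_out (Zm m) (pre (Suc i)))) \<le> real ((m + 1) * length (pB i (pre i))) + 1 + real (ZC i (pre i)) / real m"
proof -
  let ?p = "pB i (pre i)" let ?Z = "ZC i (pre i)"
  let ?q = "stf (Zm m) 0 ?p"
  have q: "?q < m" using stf_lt[OF Zm_wf[OF m], of 0 ?p] m by simp
  have "length (fst_out (Zm m) (pre (Suc i))) = length (outf (Zm m) 0 ?p) + length (outf (Zm m) ?q (replicate ?Z False))"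
    by (simp add: fst_out_outf)
  also have "\<dots> = length (outf (Zm m) 0 ?p) + (?q + ?Z) div m" using Zm_zeros[OF q] by simp
  finally have e: "length (fst_out (Zm m) (pre (Suc i))) = length (outf (Zm m) 0 ?p) + (?q + ?Z) div m" .
  have 1: "length (outf (Zm m) 0 ?p) \<le> (m + 1) * length ?p" using Zm_len[of 0 m ?p] m by simp
  have "real ((?q + ?Z) div m) \<le> real (?q + ?Z) / real m" by (rule of_nat_div_le_of_nat)
  also have "\<dots> \<le> real (m + ?Z) / real m" using q m by (intro divide_right_mono) auto
  also have "\<dots> = 1 + real ?Z / real m" using m by (simp add: field_simps)
  finally show ?thesis using e 1 by linarith
qed

lemma notLZdeep: "\<not> LZ_deep Sq"
proof
  assume "LZ_deep Sq"
  then obtain \<alpha> :: real where a: "\<alpha> > 0" and h: "\<And>C. ILFST C \<Longrightarrow> (\<forall>\<^sub>F n in sequentially.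
        real (length (fst_out C (prefix Sq n))) - real (length (LZ (prefix Sq n))) \<ge> \<alpha> * real n)"
    unfolding LZ_deep_def by blast
  define m :: nat where "m = nat \<lceil>2 / \<alpha>\<rceil> + 1"
  have m0: "0 < m" by (simp add: m_def)
  have m2: "2 / \<alpha> < real m" unfolding m_def by linarith
  then have am: "2 < \<alpha> * real m" using a by (simp add: field_simps)
  obtain M where M: "\<And>n. n \<ge> M \<Longrightarrow> real (length (fst_out (Zm m) (prefix Sq n))) - real (length (LZ (prefix Sq n))) \<ge> \<alpha> * real n"
    using h[OF Zm_ILFST[OF m0]] unfolding eventually_sequentially by blast
  define i where "i = max M (nat \<lceil>2 * (real m + 1) / \<alpha>\<rceil>)"
  let ?p = "pB i (pre i)" let ?Z = "ZC i (pre i)"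
  let ?n = "length (pre (Suc i))"
  have nM: "?n \<ge> M"
  proof -
    have "Suc i \<le> ?n" by (rule len_pre)
    moreover have "M \<le> i" by (simp add: i_def)
    ultimately show ?thesis by linarith
  qed
  have pr: "prefix Sq ?n = pre (Suc i)" by (rule prefix_pre)
  have ln: "real ?n = real (length ?p) + real ?Z" by simp
  have Zdef: "real ?Z = (real i + 1) * (real (length ?p) + 1)" by (simp add: ZC_def algebra_simps)
  have i1: "2 * (real m + 1) / \<alpha> \<le> real i" unfolding i_def by linarith
  then have i2: "2 * (real m + 1) \<le> \<alpha> * (real i + 1)" using a by (simp add: field_simps)
  have b1: "real ((m + 1) * length ?p) + 1 \<le> (real m + 1) * (real (length ?p) + 1)" by (simp add: algebra_simps)
  also have "\<dots> \<le> \<alpha> * (real i + 1) / 2 * (real (length ?p) + 1)" using i2 by (intro mult_right_mono) auto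
  also have "\<dots> = \<alpha> * real ?Z / 2" using Zdef by simp
  finally have b2: "real ((m + 1) * length ?p) + 1 \<le> \<alpha> * real ?Z / 2" .
  have Zpos: "real ?Z > 0" using Zdef by (simp add: add_pos_pos)
  have b3: "real ?Z / real m < \<alpha> * real ?Z / 2"
  proof -
    have "real ?Z * 2 < real ?Z * (\<alpha> * real m)" using am Zpos by simp
    then show ?thesis using m0 by (simp add: field_simps)
  qed
  have "real (length (fst_out (Zm m) (prefix Sq ?n))) < \<alpha> * real ?Z"
    unfolding pr using C_bound[OF m0, of i] b2 b3 by linarith
  also have "\<dots> \<le> \<alpha> * real ?n" using a ln by simp
  finally have "real (length (fst_out (Zm m) (prefix Sq ?n))) - real (length (LZ (prefix Sq ?n))) < \<alpha> * real ?n" by simp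
  then show False using M[OF nM] by simp
qed


lemma arB: "(Y::nat) = 4*X+4*N \<Longrightarrow> Z = 3*X+4*N \<Longrightarrow> N = 5*a+2 \<Longrightarrow> 4*(2*a+1+N) + (a+Y) \<le> 4*Z"
  by presburger

lemma ar_real: "4 * (A::nat) + B \<le> 4 * C \<Longrightarrow> real A + 1/4 * real B \<le> real C"
proof -
  assume "4 * A + B \<le> 4 * C"
  then have "real (4 * A + B) \<le> real (4 * C)" by (simp only: of_nat_le_iff)
  then show ?thesis by simp
qed

lemma FSdeep: "FS_deep Sq"
  unfolding FS_deep_def
proof (intro exI[of _ "1/4"] conjI allI)
  show "(0::real) < 1/4" by simp
  fix k
  show "\<exists>k'. \<exists>\<^sub>F n in sequentially. ereal_of_enat (Dk k' (prefix Sq n)) + ereal (1/4 * real n) \<le> ereal_of_enat (Dk k (prefix Sq n))"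
  proof (intro exI[of _ "fst_size (Tw (wB k))"], unfold frequently_sequentially, intro allI)
    fix M
    define i where "i = prod_encode (k, M)"
    have ki: "kidx i = k" by (simp add: i_def kidx_def)
    have Mi: "M \<le> i" by (simp add: i_def le_prod_encode_2)
    let ?p1 = "pA i (pre i)" let ?N = "NB i (pre i)" let ?w = "wB k"
    let ?n = "length (pB i (pre i))"
    have x: "prefix Sq ?n = ?p1 @ concat (replicate ?N ?w)" using prefix_pB[of i] ki by (simp add: pB_def)
    have ln: "?n = length ?p1 + ?N * lB k" using ki wB_props(1)[of k]
      by (simp add: pB_def length_concat sum_list_replicate)
    have nM: "M \<le> ?n" using Mi len_pre[of i] len_pA[of i] len_pB[of i] by linarith
    have up: "Dk (fst_size (Tw ?w)) (prefix Sq ?n) \<le> enat (2 * length ?p1 + 1 + ?N)"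
      unfolding x by (rule Dk_Tw)
    have lo: "enat (?N * (LB k + 1)) \<le> Dk k (prefix Sq ?n)"
      by (rule Dk_lower) (rule Dk_lower_run, assumption, simp add: x)
    have NB: "?N = 5 * length ?p1 + 2" by (simp add: NB_def)
    have ar: "4 * (2 * length ?p1 + 1 + ?N) + (length ?p1 + ?N * lB k) \<le> 4 * (?N * (LB k + 1))"
    proof -
      have "?N * lB k = 4 * (?N * MB k) + 4 * ?N" by (simp add: lB_def LB_def algebra_simps)
      moreover have "?N * (LB k + 1) = 3 * (?N * MB k) + 4 * ?N" by (simp add: LB_def algebra_simps)
      ultimately show ?thesis using NB arB by blast
    qed
    have "ereal_of_enat (Dk (fst_size (Tw ?w)) (prefix Sq ?n)) + ereal (1/4 * real ?n)
          \<le> ereal (real (2 * length ?p1 + 1 + ?N)) + ereal (1/4 * real ?n)"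
      using up by (intro add_right_mono) (metis ereal_of_enat_le_iff ereal_of_enat_simps(1))
    also have "\<dots> = ereal (real (2 * length ?p1 + 1 + ?N) + 1/4 * real ?n)" by simp
    also have "\<dots> \<le> ereal (real (?N * (LB k + 1)))"
    proof -
      have "real (2 * length ?p1 + 1 + ?N) + 1/4 * real ?n \<le> real (?N * (LB k + 1))"
        unfolding ln by (rule ar_real[OF ar])
      then show ?thesis by simp
    qed
    also have "\<dots> \<le> ereal_of_enat (Dk k (prefix Sq ?n))"
      using lo by (metis ereal_of_enat_le_iff ereal_of_enat_simps(1))
    finally show "\<exists>n\<ge>M. ereal_of_enat (Dk (fst_size (Tw ?w)) (prefix Sq n)) + ereal (1/4 * real n) \<le> ereal_of_enat (Dk k (prefix Sq n))"
      using nM by blast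
  qed
qed


lemma arA: "(y::nat) = 4*x+4*n \<Longrightarrow> q \<ge> 3*x+4*n \<Longrightarrow> a \<le> n \<Longrightarrow> 8*l \<le> n \<Longrightarrow> 2*a + 2*y + 8*l \<le> 8*q"
  by linarith

lemma ar_realA: "2 * a + 2 * Y + 8 * L \<le> 8 * (Q::nat) \<Longrightarrow> 1/4 * real (a + Y) \<le> real Q - real L"
proof -
  assume "2 * a + 2 * Y + 8 * L \<le> 8 * (Q::nat)"
  then have "real (2 * a + 2 * Y + 8 * L) \<le> real (8 * Q)" by (simp only: of_nat_le_iff)
  then show ?thesis by simp
qed

lemma bnd_mono: assumes a: "C \<in> bnd_set i" and b: "i \<le> j" shows "C \<in> bnd_set j"
proof -
  have h: "wf_fst C" "nstates C \<le> i" "\<And>q b. q < nstates C \<Longrightarrow> length (nu C q b) \<le> i"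
    using a by (auto simp: bnd_set_def)
  have "\<forall>q<nstates C. \<forall>b. length (nu C q b) \<le> j"
  proof (intro allI impI)
    fix q b assume "q < nstates C"
    then have "length (nu C q b) \<le> i" using h(3) by blast
    then show "length (nu C q b) \<le> j" using b by simp
  qed
  then show ?thesis using h b unfolding bnd_set_def by simp
qed

lemma ioLZ: "io_LZ_deep Sq"
  unfolding io_LZ_deep_def
proof (intro exI[of _ "1/4"] conjI allI impI)
  show "(0::real) < 1/4" by simp
  fix C assume C: "ILFST C"
  have wf: "wf_fst C" using C by (simp add: ILFST_def)
  define i0 where "i0 = nstates C + (\<Sum>q<nstates C. length (nu C q True) + length (nu C q False))"
  have Cb: "C \<in> bnd_set i0"
  proof -
    have "length (nu C q b) \<le> i0" if q: "q < nstates C" for q b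
    proof -
      have "length (nu C q b) \<le> length (nu C q True) + length (nu C q False)" by (cases b) auto
      also have "\<dots> \<le> (\<Sum>q<nstates C. length (nu C q True) + length (nu C q False))"
        using q by (intro member_le_sum) auto
      finally show ?thesis unfolding i0_def by linarith
    qed
    then show ?thesis using wf unfolding bnd_set_def i0_def by auto
  qed
  show "\<exists>\<^sub>F n in sequentially. 1/4 * real n \<le> real (length (fst_out C (prefix Sq n))) - real (length (LZ (prefix Sq n)))"
    unfolding frequently_sequentially
  proof (intro allI)
    fix M
    define i where "i = max M i0"
    have Ci: "C \<in> bnd_set i" using bnd_mono[OF Cb] by (simp add: i_def)
    let ?p = "pre i" let ?u = "uA i" let ?N = "NA i (pre i)"
    let ?x = "pA i ?p"
    let ?n = "length ?x"
    have x: "prefix Sq ?n = ?p @ concat (replicate ?N ?u)" using prefix_pA[of i] by (simp add: pA_def)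
    have ln: "?n = length ?p + ?N * lA i" using uA_props(1)[of i]
      by (simp add: pA_def length_concat sum_list_replicate)
    have nM: "M \<le> ?n" using len_pre[of i] len_pA[of i] by (simp add: i_def)
    define A where "A = length ?p + length ?u + 1"
    define e where "e = 2 * A + 11"
    have Ndef: "?N = (A * 2^e) * (A * 2^e)" using uA_props(1)[of i] by (simp add: NA_def A_def e_def Let_def)
    have une: "?u \<noteq> []" using uA_props(1)[of i] by (auto simp: lA_def)
    have lz: "8 * length (LZ (prefix Sq ?n)) \<le> ?N"
      by (rule LZ_periodic[OF une x A_def e_def Ndef])
    have pN: "length ?p \<le> ?N"
    proof -
      have "1 \<le> (2::nat)^e" by simp
      then have "A \<le> A * 2^e" by simp
      moreover have "0 < A * 2^e" using A_def by simp
      then have R1: "1 \<le> A * 2^e" by linarith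
      moreover have "A * 2^e \<le> (A * 2^e) * (A * 2^e)" using mult_le_mono2[OF R1, of "A*2^e"] by simp
      ultimately have "A \<le> (A * 2^e) * (A * 2^e)" by linarith
      then show ?thesis using Ndef A_def by simp
    qed
    have O: "?N * (LA i + 1) \<le> length (fst_out C (prefix Sq ?n))"
    proof -
      have "length (fst_out C (prefix Sq ?n)) = length (fst_out C ?p) + length (outf C (fst_state C ?p) (concat (replicate ?N ?u)))"
        unfolding x by (simp add: fst_out_outf fst_state_stf)
      then show ?thesis using A_lower[OF C Ci, of ?N ?p] by simp
    qed
    have Y: "?N * lA i = 4 * (?N * MA i) + 4 * ?N" by (simp add: lA_def LA_def algebra_simps)
    have O2: "length (fst_out C (prefix Sq ?n)) \<ge> 3 * (?N * MA i) + 4 * ?N"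
    proof -
      have e: "?N * (LA i + 1) = 3 * (?N * MA i) + 4 * ?N" by (simp add: LA_def algebra_simps)
      show ?thesis using O unfolding e .
    qed
    have "2 * length ?p + 2 * (?N * lA i) + 8 * length (LZ (prefix Sq ?n)) \<le> 8 * length (fst_out C (prefix Sq ?n))"
      by (rule arA[OF Y O2 pN lz])
    then have "1/4 * real (length ?p + ?N * lA i) \<le> real (length (fst_out C (prefix Sq ?n))) - real (length (LZ (prefix Sq ?n)))"
      by (rule ar_realA)
    then show "\<exists>n\<ge>M. 1/4 * real n \<le> real (length (fst_out C (prefix Sq n))) - real (length (LZ (prefix Sq n)))"
      using nM ln by (intro exI[of _ ?n]) simp
  qed
qed


theorem mainTheorem9:
  shows "\<exists>S :: nat \<Rightarrow> bool. io_LZ_deep S \<and> FS_deep S \<and> \<not> LZ_deep S"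
  using ioLZ FSdeep notLZdeep by blast

end
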